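(* Let $x=[a_0,a_1,a_2,\ldots]\in\mathbb{R}\setminus\mathbb{Q}$ with convergents $s_k/t_k$, and let $k\ge 0$ be such that $t_k$ and $t_{k+1}$ are both odd. Then $$\left(\frac{s_k}{t_k}\right)=\left(\frac{s_{k+1}}{t_{k+1}}\right),$$ except when either ($t_k\equiv 1\pmod 4$, $t_{k+1}\equiv 3\pmod 4$ and $k$ is odd) or ($t_k\equiv 3\pmod 4$, $t_{k+1}\equiv 1\pmod 4$ and $k$ is even); in these two exceptional cases $$\left(\frac{s_k}{t_k}\right)=-\left(\frac{s_{k+1}}{t_{k+1}}\right).$$
   Context: For $x\in\mathbb{R}\setminus\mathbb{Q}$ with regular continued fraction expansion $x=[a_0,a_1,a_2,\ldots]$ ($a_0\in\mathbb{Z}$, $a_i\ge1$ for $i\ge1$), the convergents $s_k/t_k$ are defined by $s_{-1}=1$, $s_0=a_0$, $s_k=a_ks_{k-1}+s_{k-2}$ and $t_{-1}=0$, $t_0=1$, $t_k=a_kt_{k-1}+t_{k-2}$ for $k\ge1$. For an odd natural number $n$ and an integer $m$ coprime to $n$, $\left(\frac{m}{n}\right)$ denotes the Jacobi symbol (equal to $1$ if $n=1$). *)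

theory Defs
  imports "HOL-Number_Theory.Number_Theory"
begin

fun cf_rem :: "real \<Rightarrow> nat \<Rightarrow> real" where
  "cf_rem x 0 = x"
| "cf_rem x (Suc n) = 1 / frac (cf_rem x n)"

definition cf_a :: "real \<Rightarrow> nat \<Rightarrow> int" where
  "cf_a x n = \<lfloor>cf_rem x n\<rfloor>"

text \<open>Convergent numerators s_k and denominators t_k (k \<ge> 0), with
  s_{-1} = 1, s_0 = a_0, t_{-1} = 0, t_0 = 1.\<close>
fun cf_s :: "real \<Rightarrow> nat \<Rightarrow> int" where
  "cf_s x 0 = cf_a x 0"
| "cf_s x (Suc 0) = cf_a x 1 * cf_a x 0 + 1"
| "cf_s x (Suc (Suc n)) = cf_a x (Suc (Suc n)) * cf_s x (Suc n) + cf_s x n"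

fun cf_t :: "real \<Rightarrow> nat \<Rightarrow> int" where
  "cf_t x 0 = 1"
| "cf_t x (Suc 0) = cf_a x 1"
| "cf_t x (Suc (Suc n)) = cf_a x (Suc (Suc n)) * cf_t x (Suc n) + cf_t x n"

definition Jacobi :: "int \<Rightarrow> int \<Rightarrow> int" where
  "Jacobi m n = (\<Prod>p\<in>prime_factors n. Legendre m p ^ multiplicity p n)"

end

theory Submission
  imports Defs
begin

lemma Legendre_vals: "Legendre a p \<in> {-1,0,1}"
  by (simp add: Legendre_def)

lemma small_cong_eq:
  fixes x y p :: int
  assumes "x \<in> {-1,0,1}" "y \<in> {-1,0,1}" "p > 2" "[x = y] (mod p)"
  shows "x = y"
proof (rule ccontr)
  assume ne: "x \<noteq> y"
  have "p dvd (x - y)" using assms(4) by (simp add: cong_iff_dvd_diff)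
  hence "\<bar>p\<bar> \<le> \<bar>x - y\<bar>" using ne by (intro dvd_imp_le_int) auto
  moreover have "\<bar>x - y\<bar> \<le> 2" using assms(1,2) by auto
  ultimately show False using assms(3) by simp
qed

lemma Legendre_mult:
  fixes p :: int
  assumes "prime p" "p > 2"
  shows "Legendre (a*b) p = Legendre a p * Legendre b p"
proof -
  define n where "n = nat p"
  have pn: "p = int n" using assms n_def by simp
  have n: "prime n" "2 < n" using assms pn by auto
  have "[Legendre (a*b) p = (a*b) ^ ((n - 1) div 2)] (mod p)"
    using euler_criterion[OF n] pn by simp
  moreover have "[Legendre a p * Legendre b p = a ^ ((n - 1) div 2) * b ^ ((n - 1) div 2)] (mod p)"
    using euler_criterion[OF n, of a] euler_criterion[OF n, of b] pn cong_mult by simp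
  ultimately have "[Legendre (a*b) p = Legendre a p * Legendre b p] (mod p)"
    by (metis cong_sym cong_trans power_mult_distrib)
  moreover have "Legendre a p * Legendre b p \<in> {-1,0,1}"
    using Legendre_vals[of a p] Legendre_vals[of b p] by auto
  ultimately show ?thesis using small_cong_eq Legendre_vals assms(2) by blast
qed

definition eps :: "int \<Rightarrow> int" where
  "eps n = (if n mod 4 = 1 then 1 else -1)"

lemma Legendre_m1:
  fixes p :: int
  assumes "prime p" "p > 2"
  shows "Legendre (-1) p = eps p"
proof -
  define n where "n = nat p"
  have pn: "p = int n" using assms n_def by simp
  have n: "prime n" "2 < n" using assms pn by auto
  have "odd p" using assms prime_odd_int by blast
  have c: "[Legendre (-1) p = (-1) ^ ((n - 1) div 2)] (mod p)"
    using euler_criterion[OF n] pn by simp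
  have "(-1::int) ^ ((n - 1) div 2) = eps p"
  proof (cases "p mod 4 = 1")
    case True
    hence "even ((n - 1) div 2)" using pn by presburger
    thus ?thesis using True by (simp add: eps_def)
  next
    case False
    hence "odd ((n - 1) div 2)" using pn \<open>odd p\<close> by presburger
    thus ?thesis using False by (simp add: eps_def)
  qed
  moreover have "eps p \<in> {-1,0,1}" by (simp add: eps_def)
  ultimately show ?thesis using c small_cong_eq Legendre_vals assms(2) by metis
qed

lemma Legendre_cong:
  assumes "[a = b] (mod p)"
  shows "Legendre a p = Legendre b p"
  using assms unfolding Legendre_def QuadRes_def cong_def by simp

lemma Legendre_one:
  fixes p :: int
  assumes "prime p"
  shows "Legendre 1 p = 1"
proof -
  have "p > 1" using assms prime_gt_1_int by blast
  hence "\<not> [1 = 0] (mod p)" by (simp add: cong_def)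
  moreover have "QuadRes p 1" unfolding QuadRes_def by (rule exI[of _ 1]) simp
  ultimately show ?thesis by (simp add: Legendre_def)
qed

lemma Legendre_sq:
  fixes p :: int
  assumes "prime p" "p > 2" "coprime a p"
  shows "Legendre (a*a) p = 1"
proof -
  have "\<not> [a = 0] (mod p)"
  proof
    assume "[a = 0] (mod p)"
    hence "p dvd a" by (simp add: cong_0_iff)
    with assms(3) have "is_unit p" by (meson coprime_common_divisor dvd_refl)
    with assms(1) show False using not_prime_unit by blast
  qed
  thus ?thesis using Legendre_mult[OF assms(1,2)] by (auto simp: Legendre_def)
qed

lemma Jacobi_superset:
  fixes n :: int
  assumes "finite P" "\<forall>p\<in>P. prime p" "prime_factors n \<subseteq> P" "n \<noteq> 0"
  shows "Jacobi a n = (\<Prod>p\<in>P. Legendre a p ^ multiplicity p n)"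
  unfolding Jacobi_def
proof (rule prod.mono_neutral_left[OF assms(1,3)])
  show "\<forall>p\<in>P - prime_factors n. Legendre a p ^ multiplicity p n = 1"
  proof
    fix p assume "p \<in> P - prime_factors n"
    hence "\<not> p dvd n" using assms(2,4) by (auto simp: in_prime_factors_iff)
    thus "Legendre a p ^ multiplicity p n = 1" by (simp add: not_dvd_imp_multiplicity_0)
  qed
qed

lemma Jacobi_mult_right:
  fixes m n :: int
  assumes "m \<noteq> 0" "n \<noteq> 0"
  shows "Jacobi a (m*n) = Jacobi a m * Jacobi a n"
proof -
  define P where "P = prime_factors m \<union> prime_factors n"
  have fP: "finite P" and pP: "\<forall>p\<in>P. prime p" unfolding P_def by auto
  have "Jacobi a (m*n) = (\<Prod>p\<in>P. Legendre a p ^ multiplicity p (m*n))"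
    using assms by (intro Jacobi_superset[OF fP pP]) (auto simp: P_def prime_factors_product)
  also have "\<dots> = (\<Prod>p\<in>P. Legendre a p ^ multiplicity p m * Legendre a p ^ multiplicity p n)"
  proof (intro prod.cong refl)
    fix p assume "p \<in> P"
    hence "prime_elem p" using pP prime_imp_prime_elem by blast
    thus "Legendre a p ^ multiplicity p (m*n) = Legendre a p ^ multiplicity p m * Legendre a p ^ multiplicity p n"
      using assms by (simp add: prime_elem_multiplicity_mult_distrib power_add)
  qed
  also have "\<dots> = (\<Prod>p\<in>P. Legendre a p ^ multiplicity p m) * (\<Prod>p\<in>P. Legendre a p ^ multiplicity p n)"
    by (rule prod.distrib)
  also have "\<dots> = Jacobi a m * Jacobi a n"
    using assms by (subst (1 2) Jacobi_superset[OF fP pP]) (auto simp: P_def)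
  finally show ?thesis .
qed

lemma Jacobi_prime:
  fixes q :: int
  assumes "prime q"
  shows "Jacobi a q = Legendre a q"
  using assms proof -
  have "multiplicity q q = 1" using assms multiplicity_prime prime_imp_prime_elem by blast
  thus ?thesis using assms by (simp add: Jacobi_def prime_factorization_prime)
qed

lemma odd_prime_factor:
  fixes n p :: int
  assumes "odd n" "p \<in> prime_factors n"
  shows "prime p \<and> p > 2"
proof -
  have "prime p" "p dvd n" using assms by (auto simp: in_prime_factors_iff)
  moreover have "p \<noteq> 2" using assms(1) \<open>p dvd n\<close> by auto
  ultimately show ?thesis using prime_ge_2_int[of p] by force
qed

lemma Jacobi_mult_left:
  fixes n :: int
  assumes "odd n"
  shows "Jacobi (a*b) n = Jacobi a n * Jacobi b n"
proof -
  have "Jacobi (a*b) n = (\<Prod>p\<in>prime_factors n. Legendre a p ^ multiplicity p n * Legendre b p ^ multiplicity p n)"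
    unfolding Jacobi_def
    using odd_prime_factor[OF assms] Legendre_mult
    by (intro prod.cong refl) (simp add: power_mult_distrib)
  also have "\<dots> = Jacobi a n * Jacobi b n" unfolding Jacobi_def by (rule prod.distrib)
  finally show ?thesis .
qed

lemma Jacobi_cong:
  fixes n :: int
  assumes "[a = b] (mod n)"
  shows "Jacobi a n = Jacobi b n"
  unfolding Jacobi_def
proof (intro prod.cong refl)
  fix p assume "p \<in> prime_factors n"
  hence "p dvd n" by (auto simp: in_prime_factors_iff)
  hence "[a = b] (mod p)" using assms cong_dvd_modulus by blast
  thus "Legendre a p ^ multiplicity p n = Legendre b p ^ multiplicity p n"
    using Legendre_cong by simp
qed

lemma Jacobi_one: "Jacobi 1 n = 1"
  unfolding Jacobi_def by (intro prod.neutral) (auto simp: Legendre_one in_prime_factors_iff)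

lemma Jacobi_one_right: "Jacobi a 1 = 1"
  unfolding Jacobi_def by simp

lemma Jacobi_sq:
  fixes n :: int
  assumes "odd n" "coprime a n"
  shows "Jacobi a n * Jacobi a n = 1"
proof -
  have "Jacobi (a*a) n = 1"
    unfolding Jacobi_def
  proof (intro prod.neutral ballI)
    fix p assume p: "p \<in> prime_factors n"
    hence "p dvd n" by (auto simp: in_prime_factors_iff)
    hence "coprime a p" using assms(2) coprime_imp_coprime dvd_trans by blast
    thus "Legendre (a*a) p ^ multiplicity p n = 1"
      using odd_prime_factor[OF assms(1) p] Legendre_sq by simp
  qed
  thus ?thesis using Jacobi_mult_left[OF assms(1)] by simp
qed

lemma odd_pos_induct[consumes 2, case_names one step]:
  fixes n :: int
  assumes "odd n" "n > 0" and "P 1"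
    and "\<And>q n. prime q \<Longrightarrow> q > 2 \<Longrightarrow> odd n \<Longrightarrow> n > 0 \<Longrightarrow> P n \<Longrightarrow> P (q*n)"
  shows "P n"
  using assms(1,2)
proof (induction "nat n" arbitrary: n rule: less_induct)
  case less
  show ?case
  proof (cases "n = 1")
    case True thus ?thesis using assms(3) by simp
  next
    case False
    hence "\<not> is_unit n" using less.prems by auto
    moreover have "n \<noteq> 0" using less.prems by simp
    ultimately obtain q where q: "q dvd n" "prime q" using prime_divisor_exists by blast
    then obtain m where m: "n = q * m" by blast
    have q2: "q \<ge> 2" using q prime_ge_2_int by blast
    have "q \<noteq> 2"
    proof
      assume "q = 2"
      hence "2 dvd n" using q(1) by simp
      thus False using less.prems(1) by simp
    qed
    hence q3: "q > 2" using q2 by simp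
    have "m > 0" using m less.prems(2) q2 by (smt (verit) mult_nonneg_nonpos)
    have "odd m" using m less.prems(1) by simp
    have "1 * m < q * m" using q3 \<open>m > 0\<close> by (intro mult_strict_right_mono) auto
    hence "m < n" using m by simp
    hence "nat m < nat n" using \<open>m > 0\<close> by simp
    hence "P m" using less.hyps[of m] \<open>m > 0\<close> \<open>odd m\<close> by blast
    thus ?thesis using assms(4)[OF q(2) q3 \<open>odd m\<close> \<open>m > 0\<close>] m by simp
  qed
qed

lemma eps_mult:
  fixes m n :: int
  assumes "odd m" "odd n"
  shows "eps (m*n) = eps m * eps n"
proof -
  have "(m*n) mod 4 = ((m mod 4)*(n mod 4)) mod 4" by (simp add: mod_mult_eq)
  moreover have "m mod 4 = 1 \<or> m mod 4 = 3" "n mod 4 = 1 \<or> n mod 4 = 3" using assms by presburger+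
  ultimately show ?thesis unfolding eps_def by auto
qed

lemma Jacobi_m1:
  fixes n :: int
  assumes "odd n" "n > 0"
  shows "Jacobi (-1) n = eps n"
  using assms
proof (induction n rule: odd_pos_induct)
  case one thus ?case by (simp add: Jacobi_one_right eps_def)
next
  case (step q n)
  have "odd q" using step prime_odd_int by blast
  have "Jacobi (-1) (q*n) = Jacobi (-1) q * Jacobi (-1) n"
    using step by (intro Jacobi_mult_right) auto
  also have "\<dots> = eps q * eps n" using step(5) Jacobi_prime[OF step(1)] Legendre_m1[OF step(1,2)] by simp
  also have "\<dots> = eps (q*n)" using eps_mult \<open>odd q\<close> step by simp
  finally show ?case .
qed

definition S :: "int \<Rightarrow> int \<Rightarrow> int" where
  "S m n = (if m mod 4 = 3 \<and> n mod 4 = 3 then -1 else 1)"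

lemma S_sym: "S m n = S n m"
  unfolding S_def by auto

lemma S_mult_right:
  fixes m a b :: int
  assumes "odd a" "odd b"
  shows "S m (a*b) = S m a * S m b"
proof -
  have "(a*b) mod 4 = ((a mod 4)*(b mod 4)) mod 4" by (simp add: mod_mult_eq)
  moreover have "a mod 4 = 1 \<or> a mod 4 = 3" "b mod 4 = 1 \<or> b mod 4 = 3" using assms by presburger+
  ultimately show ?thesis unfolding S_def by auto
qed

lemma QR_S:
  fixes p q :: int
  assumes "prime p" "p > 2" "prime q" "q > 2" "p \<noteq> q"
  shows "Legendre p q * Legendre q p = S p q"
proof -
  have "odd p" "odd q" using assms prime_odd_int by blast+
  have e: "even ((x - 1) div 2) \<longleftrightarrow> x mod 4 = 1" if "odd x" for x :: int
    using that by presburger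
  have "Legendre p q * Legendre q p = (-1::int) ^ (nat ((p - 1) div 2 * ((q - 1) div 2)))"
    using Quadratic_Reciprocity_int[of p q] assms by simp
  moreover have "0 \<le> (p - 1) div 2 * ((q - 1) div 2)" using assms by simp
  moreover have "p mod 4 = 1 \<or> p mod 4 = 3" "q mod 4 = 1 \<or> q mod 4 = 3"
    using \<open>odd p\<close> \<open>odd q\<close> by presburger+
  ultimately show ?thesis
    using e[OF \<open>odd p\<close>] e[OF \<open>odd q\<close>]
    by (auto simp: S_def even_nat_iff)
qed

lemma recip_prime:
  fixes p n :: int
  assumes "odd n" "n > 0" "prime p" "p > 2" "coprime p n"
  shows "Jacobi p n * Jacobi n p = S p n"
  using assms(1,2,5)
proof (induction n rule: odd_pos_induct)
  case one thus ?case
    using assms(3) by (simp add: Jacobi_one_right Jacobi_one Jacobi_prime Legendre_one S_def)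
next
  case (step q n)
  have "odd p" using assms prime_odd_int by blast
  have cq: "coprime p q" and cn: "coprime p n" using step(6) by auto
  have "p \<noteq> q" using cq assms(3) by auto
  have "Jacobi p (q*n) = Jacobi p q * Jacobi p n"
    using step by (intro Jacobi_mult_right) auto
  moreover have "Jacobi (q*n) p = Jacobi q p * Jacobi n p"
    using \<open>odd p\<close> by (rule Jacobi_mult_left)
  moreover have "Jacobi p q * Jacobi q p = S p q"
    using QR_S[OF assms(3,4) step(1,2) \<open>p \<noteq> q\<close>] Jacobi_prime[OF step(1)] Jacobi_prime[OF assms(3)]
    by simp
  moreover have "Jacobi p n * Jacobi n p = S p n" using step(5) cn by blast
  moreover have "S p (q*n) = S p q * S p n"
    using step prime_odd_int by (intro S_mult_right) auto
  ultimately show ?case by (simp add: algebra_simps)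
qed

lemma recip:
  fixes m n :: int
  assumes "odd m" "m > 0" "odd n" "n > 0" "coprime m n"
  shows "Jacobi m n * Jacobi n m = S m n"
  using assms(1,2,5)
proof (induction m rule: odd_pos_induct)
  case one thus ?case by (simp add: Jacobi_one_right Jacobi_one S_def)
next
  case (step q m)
  have "odd q" using step prime_odd_int by blast
  have cq: "coprime q n" and cm: "coprime m n" using step(6) by auto
  have "Jacobi (q*m) n = Jacobi q n * Jacobi m n"
    using assms(3) by (rule Jacobi_mult_left)
  moreover have "Jacobi n (q*m) = Jacobi n q * Jacobi n m"
    using step by (intro Jacobi_mult_right) auto
  moreover have "Jacobi q n * Jacobi n q = S q n"
    using recip_prime[OF assms(3,4) step(1,2) cq] .
  moreover have "Jacobi m n * Jacobi n m = S m n" using step(5) cm by blast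
  moreover have "S (q*m) n = S q n * S m n"
    using S_mult_right[OF \<open>odd q\<close> step(3), of n] S_sym by metis
  ultimately show ?case by (simp add: algebra_simps)
qed

lemma cf_rem_irr:
  assumes "x \<notin> \<rat>"
  shows "cf_rem x n \<notin> \<rat>"
proof (induction n)
  case 0 thus ?case using assms by simp
next
  case (Suc n)
  define r where "r = cf_rem x n"
  show ?case
  proof
    assume "cf_rem x (Suc n) \<in> \<rat>"
    hence "1 / frac r \<in> \<rat>" by (simp add: r_def)
    hence "inverse (1 / frac r) \<in> \<rat>" by (rule Rats_inverse)
    hence "frac r \<in> \<rat>" by simp
    hence "of_int \<lfloor>r\<rfloor> + frac r \<in> \<rat>" by (intro Rats_add) auto
    hence "r \<in> \<rat>" by (simp add: frac_def)
    thus False using Suc r_def by simp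
  qed
qed

lemma cf_a_pos:
  assumes "x \<notin> \<rat>"
  shows "cf_a x (Suc n) \<ge> 1"
proof -
  define r where "r = cf_rem x n"
  have "r \<notin> \<int>" using cf_rem_irr[OF assms, of n] Ints_subset_Rats r_def by blast
  hence "frac r > 0" using frac_ge_0[of r] frac_eq_0_iff[of r] by linarith
  moreover have "frac r < 1" by (rule frac_lt_1)
  ultimately have "1 / frac r \<ge> 1" by simp
  thus ?thesis by (simp add: cf_a_def r_def)
qed

lemma cf_t_pos:
  assumes "x \<notin> \<rat>"
  shows "cf_t x n \<ge> 1 \<and> cf_t x (Suc n) \<ge> 1"
proof (induction n)
  case 0 thus ?case using cf_a_pos[OF assms, of 0] by simp
next
  case (Suc n)
  have "cf_a x (Suc (Suc n)) \<ge> 1" by (rule cf_a_pos[OF assms])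
  hence "cf_a x (Suc (Suc n)) * cf_t x (Suc n) \<ge> 1 * 1"
    using Suc by (intro mult_mono) auto
  thus ?case using Suc by simp
qed

lemma cf_det:
  "cf_s x (Suc k) * cf_t x k - cf_s x k * cf_t x (Suc k) = (-1) ^ k"
proof (induction k)
  case 0 thus ?case by simp
next
  case (Suc k)
  show ?case using Suc by (simp add: algebra_simps)
qed

theorem lemma1:
  fixes x :: real and k :: nat
  assumes "x \<notin> \<rat>"
    and "odd (cf_t x k)" and "odd (cf_t x (Suc k))"
  shows "(if (cf_t x k mod 4 = 1 \<and> cf_t x (Suc k) mod 4 = 3 \<and> odd k) \<or>
             (cf_t x k mod 4 = 3 \<and> cf_t x (Suc k) mod 4 = 1 \<and> even k)
          then Jacobi (cf_s x k) (cf_t x k) = - Jacobi (cf_s x (Suc k)) (cf_t x (Suc k))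
          else Jacobi (cf_s x k) (cf_t x k) = Jacobi (cf_s x (Suc k)) (cf_t x (Suc k)))"
proof -
  define t where "t = cf_t x k"
  define t' where "t' = cf_t x (Suc k)"
  define s where "s = cf_s x k"
  define s' where "s' = cf_s x (Suc k)"
  define e :: int where "e = (-1) ^ k"
  have det: "s' * t - s * t' = e" using cf_det[of x k] by (simp add: s_def s'_def t_def t'_def e_def)
  have tp: "t > 0" "t' > 0" using cf_t_pos[OF assms(1), of k] by (auto simp: t_def t'_def)
  have ot: "odd t" "odd t'" using assms(2,3) by (auto simp: t_def t'_def)
  have ue: "is_unit e" by (simp add: e_def)
  have ctt: "coprime t' t"
  proof (rule coprimeI)
    fix c assume "c dvd t'" "c dvd t"
    hence "c dvd s' * t - s * t'" by simp
    thus "is_unit c" using det ue dvd_unit_imp_unit by metis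
  qed
  have cst: "coprime s' t'"
  proof (rule coprimeI)
    fix c assume "c dvd s'" "c dvd t'"
    hence "c dvd s' * t - s * t'" by simp
    thus "is_unit c" using det ue dvd_unit_imp_unit by metis
  qed
  have c1: "[s * t' = - e] (mod t)"
  proof -
    have "s * t' - (-e) = t * s'" using det by (simp add: algebra_simps)
    thus ?thesis unfolding cong_iff_dvd_diff by simp
  qed
  have c2: "[s' * t = e] (mod t')"
  proof -
    have "s' * t - e = t' * s" using det by (simp add: algebra_simps)
    thus ?thesis unfolding cong_iff_dvd_diff by simp
  qed
  have X: "Jacobi s t * Jacobi t' t = Jacobi (-e) t"
    using Jacobi_mult_left[OF ot(1)] Jacobi_cong[OF c1] by simp
  have Y: "Jacobi s' t' * Jacobi t t' = Jacobi e t'"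
    using Jacobi_mult_left[OF ot(2)] Jacobi_cong[OF c2] by simp
  have Z: "Jacobi t' t * Jacobi t t' = S t' t"
    using recip[OF ot(2) tp(2) ot(1) tp(1) ctt] .
  have B: "Jacobi s' t' * Jacobi s' t' = 1" using Jacobi_sq[OF ot(2) cst] .
  have main: "Jacobi s t = Jacobi (-e) t * Jacobi e t' * S t' t * Jacobi s' t'"
  proof -
    have "S t' t * S t' t = 1" by (simp add: S_def)
    hence "Jacobi s t = Jacobi s t * (Jacobi s' t' * Jacobi s' t') * (S t' t * S t' t)" using B by simp
    also have "\<dots> = (Jacobi s t * Jacobi t' t) * (Jacobi s' t' * Jacobi t t') * S t' t * Jacobi s' t'"
      using Z by (simp add: algebra_simps)
    finally show ?thesis using X Y by (simp add: algebra_simps)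
  qed
  have m4: "t mod 4 = 1 \<or> t mod 4 = 3" "t' mod 4 = 1 \<or> t' mod 4 = 3" using ot by presburger+
  have J1: "Jacobi (-1) t = eps t" "Jacobi (-1) t' = eps t'" using Jacobi_m1 ot tp by auto
  have ev: "Jacobi s t = (if t mod 4 = 3 \<and> t' mod 4 = 1 then -1 else 1) * Jacobi s' t'" if "even k"
  proof -
    have "e = 1" using that by (simp add: e_def)
    hence "Jacobi s t = eps t * S t' t * Jacobi s' t'" using main J1 by (simp add: Jacobi_one)
    moreover have "eps t * S t' t = (if t mod 4 = 3 \<and> t' mod 4 = 1 then -1 else 1)"
      using m4 unfolding eps_def S_def by auto
    ultimately show ?thesis by simp
  qed
  have od: "Jacobi s t = (if t mod 4 = 1 \<and> t' mod 4 = 3 then -1 else 1) * Jacobi s' t'" if "odd k"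
  proof -
    have "e = -1" using that by (simp add: e_def)
    hence "Jacobi s t = eps t' * S t' t * Jacobi s' t'" using main J1 by (simp add: Jacobi_one)
    moreover have "eps t' * S t' t = (if t mod 4 = 1 \<and> t' mod 4 = 3 then -1 else 1)"
      using m4 unfolding eps_def S_def by auto
    ultimately show ?thesis by simp
  qed
  show ?thesis
  proof (cases "even k")
    case True
    thus ?thesis using ev m4 unfolding t_def[symmetric] t'_def[symmetric] s_def[symmetric] s'_def[symmetric]
      by auto
  next
    case False
    thus ?thesis using od m4 unfolding t_def[symmetric] t'_def[symmetric] s_def[symmetric] s'_def[symmetric]
      by auto
  qed
qed

end
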